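(* Let $N$, $\mathfrak h$, $\alpha_i$, $\mathcal A$, $F$, $v_1,\dots,v_r$ be as in the context. Problem 1 has a solution if and only if Problem 2 has a solution.
   Context: A generalised Cartan matrix is $N=[n(i,j)]_{1\le i,j\le r}$ with $n(i,j)\in\mathbb Z$, $n(i,i)=2$, $n(i,j)\le 0$ for $i\neq j$, and $n(i,j)=0\iff n(j,i)=0$. Let $s$ be the corank of $N$, $\mathfrak h$ the complex vector space with basis $H_1,\dots,H_{r+s}$, and $\alpha_1,\dots,\alpha_r\in\mathfrak h^*$ linearly independent with $\alpha_j(H_i)=n(i,j)$ for $1\le i,j\le r$. $\mathcal A$ is a complex commutative algebra, $\mathrm{Der}(\mathcal A)$ its Lie algebra of derivations; for $a\in\mathcal A$, $D\in\mathrm{Der}(\mathcal A)$, $aD$ is $b\mapsto aD(b)$. $F:\mathfrak h\to\mathrm{Der}(\mathcal A)$ is a Lie algebra homomorphism and $v_1,\dots,v_r\in\mathcal A$ are invertible with $F(H)(v_i)=\alpha_i(H)v_i$ for all $H\in\mathfrak h$. For $\delta_1,\dots,\delta_r,\delta_{-1},\dots,\delta_{-r}\in\mathrm{Im}\,F$ put $\mathbf X_i=v_i\delta_i$, $\mathbf X_{-i}=v_i^{-1}\delta_{-i}$, $\mathbf H_a=F(H_a)$, and consider the relations: (a) $[\mathbf H_a,\mathbf H_b]=0$; (b) $[\mathbf X_i,\mathbf X_{-i}]=\mathbf H_i$ and $[\mathbf X_i,\mathbf X_{-j}]=0$ for $i\ne j$; (c) $[\mathbf H_a,\mathbf X_{\pm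 j}]=\pm\alpha_j(H_a)\mathbf X_{\pm j}$; (d) $\mathrm{ad}(\mathbf X_i)^{1-n(i,j)}(\mathbf X_j)=0$ for $i\ne j$; (e) $\mathrm{ad}(\mathbf X_{-i})^{1-n(i,j)}(\mathbf X_{-j})=0$ for $i\ne j$. Problem 1 has a solution if such $\delta$'s exist satisfying (a)–(e); Problem 2 has a solution if such $\delta$'s exist satisfying (a)–(c). *)

theory Defs
  imports Complex_Main
begin

text \<open>Indices are 0-based: i,j range over {..<r}; the basis H_0..H_{r+s-1} of h
  is indexed by a < r+s.\<close>

definition gen_cartan :: "nat \<Rightarrow> (nat \<Rightarrow> nat \<Rightarrow> int) \<Rightarrow> bool" where
  "gen_cartan r N \<longleftrightarrow>
     (\<forall>i<r. N i i = 2) \<and>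
     (\<forall>i<r. \<forall>j<r. i \<noteq> j \<longrightarrow> N i j \<le> 0) \<and>
     (\<forall>i<r. \<forall>j<r. N i j = 0 \<longleftrightarrow> N j i = 0)"

definition lin_indep_fam :: "(nat \<Rightarrow> nat \<Rightarrow> complex) \<Rightarrow> nat set \<Rightarrow> nat \<Rightarrow> bool" where
  "lin_indep_fam u S m \<longleftrightarrow>
     (\<forall>c. (\<forall>k<m. (\<Sum>i\<in>S. c i * u i k) = 0) \<longrightarrow> (\<forall>i\<in>S. c i = 0))"

definition mat_rank :: "nat \<Rightarrow> (nat \<Rightarrow> nat \<Rightarrow> int) \<Rightarrow> nat" where
  "mat_rank r N = Max {card S | S. S \<subseteq> {..<r} \<and>
                         lin_indep_fam (\<lambda>j k. of_int (N k j)) S r}"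

definition corank :: "nat \<Rightarrow> (nat \<Rightarrow> nat \<Rightarrow> int) \<Rightarrow> nat" where
  "corank r N = r - mat_rank r N"

text \<open>A complex commutative (unital) algebra: a commutative ring with a ring
  homomorphism emb from C (scalar multiplication z.x = emb z * x).\<close>
definition cplx_alg :: "(complex \<Rightarrow> 'a::comm_ring_1) \<Rightarrow> bool" where
  "cplx_alg emb \<longleftrightarrow> emb 1 = 1 \<and> (\<forall>x y. emb (x + y) = emb x + emb y) \<and>
                     (\<forall>x y. emb (x * y) = emb x * emb y)"

definition is_der :: "(complex \<Rightarrow> 'a::comm_ring_1) \<Rightarrow> ('a \<Rightarrow> 'a) \<Rightarrow> bool" where
  "is_der emb D \<longleftrightarrow> (\<forall>x y. D (x + y) = D x + D y) \<and>
                     (\<forall>z x. D (emb z * x) = emb z * D x) \<and>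
                     (\<forall>x y. D (x * y) = x * D y + y * D x)"

definition lb :: "('a::comm_ring_1 \<Rightarrow> 'a) \<Rightarrow> ('a \<Rightarrow> 'a) \<Rightarrow> ('a \<Rightarrow> 'a)" where
  "lb P Q = (\<lambda>x. P (Q x) - Q (P x))"

definition mulD :: "'a::comm_ring_1 \<Rightarrow> ('a \<Rightarrow> 'a) \<Rightarrow> ('a \<Rightarrow> 'a)" where
  "mulD a D = (\<lambda>b. a * D b)"

definition rinv :: "'a::comm_ring_1 \<Rightarrow> 'a" where
  "rinv x = (THE y. x * y = 1)"

text \<open>The linear map F : h -> Der(A), given by its values D a = F(H_a) on the basis;
  an element H = sum_a c a H_a of h is given by its coordinates c.\<close>
definition Fmap :: "(complex \<Rightarrow> 'a::comm_ring_1) \<Rightarrow> nat \<Rightarrow> (nat \<Rightarrow> 'a \<Rightarrow> 'a)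
                    \<Rightarrow> (nat \<Rightarrow> complex) \<Rightarrow> ('a \<Rightarrow> 'a)" where
  "Fmap emb n D c = (\<lambda>x. \<Sum>a<n. emb (c a) * D a x)"

definition ImF :: "(complex \<Rightarrow> 'a::comm_ring_1) \<Rightarrow> nat \<Rightarrow> (nat \<Rightarrow> 'a \<Rightarrow> 'a) \<Rightarrow> ('a \<Rightarrow> 'a) set" where
  "ImF emb n D = {Fmap emb n D c | c. True}"

text \<open>Relations (a)-(c). alpha j a = alpha_j(H_a); dp i = delta_i, dm i = delta_{-i}.\<close>
definition rels_abc ::
  "(complex \<Rightarrow> 'a::comm_ring_1) \<Rightarrow> nat \<Rightarrow> nat \<Rightarrow> (nat \<Rightarrow> 'a \<Rightarrow> 'a) \<Rightarrow> (nat \<Rightarrow> nat \<Rightarrow> complex)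
   \<Rightarrow> (nat \<Rightarrow> 'a) \<Rightarrow> (nat \<Rightarrow> 'a \<Rightarrow> 'a) \<Rightarrow> (nat \<Rightarrow> 'a \<Rightarrow> 'a) \<Rightarrow> bool" where
  "rels_abc emb r s D alpha v dp dm \<longleftrightarrow>
     (let X = (\<lambda>i. mulD (v i) (dp i)); Y = (\<lambda>i. mulD (rinv (v i)) (dm i)) in
     (\<forall>a<r+s. \<forall>b<r+s. lb (D a) (D b) = (\<lambda>_. 0)) \<and>
     (\<forall>i<r. lb (X i) (Y i) = D i) \<and>
     (\<forall>i<r. \<forall>j<r. i \<noteq> j \<longrightarrow> lb (X i) (Y j) = (\<lambda>_. 0)) \<and>
     (\<forall>a<r+s. \<forall>j<r. lb (D a) (X j) = mulD (emb (alpha j a)) (X j) \<and>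
                     lb (D a) (Y j) = mulD (emb (- alpha j a)) (Y j)))"

definition rels_de ::
  "nat \<Rightarrow> (nat \<Rightarrow> nat \<Rightarrow> int) \<Rightarrow> (nat \<Rightarrow> 'a::comm_ring_1)
   \<Rightarrow> (nat \<Rightarrow> 'a \<Rightarrow> 'a) \<Rightarrow> (nat \<Rightarrow> 'a \<Rightarrow> 'a) \<Rightarrow> bool" where
  "rels_de r N v dp dm \<longleftrightarrow>
     (let X = (\<lambda>i. mulD (v i) (dp i)); Y = (\<lambda>i. mulD (rinv (v i)) (dm i)) in
     (\<forall>i<r. \<forall>j<r. i \<noteq> j \<longrightarrow> (lb (X i) ^^ nat (1 - N i j)) (X j) = (\<lambda>_. 0)) \<and>
     (\<forall>i<r. \<forall>j<r. i \<noteq> j \<longrightarrow> (lb (Y i) ^^ nat (1 - N i j)) (Y j) = (\<lambda>_. 0)))"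

definition problem1 where
  "problem1 emb r s N D alpha v \<longleftrightarrow>
     (\<exists>dp dm. (\<forall>i<r. dp i \<in> ImF emb (r+s) D \<and> dm i \<in> ImF emb (r+s) D) \<and>
              rels_abc emb r s D alpha v dp dm \<and> rels_de r N v dp dm)"

definition problem2 where
  "problem2 emb r s D alpha v \<longleftrightarrow>
     (\<exists>dp dm. (\<forall>i<r. dp i \<in> ImF emb (r+s) D \<and> dm i \<in> ImF emb (r+s) D) \<and>
              rels_abc emb r s D alpha v dp dm)"

end

theory Submission
  imports Defs
begin

definition lam :: "nat \<Rightarrow> (nat \<Rightarrow> complex) \<Rightarrow> (nat \<Rightarrow> complex) \<Rightarrow> complex" where
  "lam n \<beta> c = (\<Sum>a<n. c a * \<beta> a)"

lemma lam_lin: "lam n \<beta> (\<lambda>a. x * c a - y * d a) = x * lam n \<beta> c - y * lam n \<beta> d"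
  by (simp add: lam_def sum_subtractf sum_distrib_left algebra_simps)

lemma lam_neg: "lam n (\<lambda>a. - \<beta> a) c = - lam n \<beta> c"
  by (simp add: lam_def sum_negf)

primrec Gs :: "((nat \<Rightarrow> complex) \<Rightarrow> complex) \<Rightarrow> (nat \<Rightarrow> complex) \<Rightarrow> (nat \<Rightarrow> complex)
   \<Rightarrow> complex \<Rightarrow> nat \<Rightarrow> (nat \<Rightarrow> complex)" where
  "Gs mi gi gj cst 0 = gj"
| "Gs mi gi gj cst (Suc m) = (\<lambda>a. (cst + of_nat m * mi gi) * Gs mi gi gj cst m a - mi (Gs mi gi gj cst m) * gi a)"

lemma vanish:
  assumes "p \<noteq> 0 \<Longrightarrow> p = - A" "lam n bi gi = A" "lam n bj gi = p" "lam n bi gj = p'"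
    and "m = 1 + (if p = 0 then 0 else 1) + (if p' = 0 then 0 else 1)"
  shows "Gs (lam n bi) gi gj p m = (\<lambda>_. 0)"
proof -
  have G1: "Gs (lam n bi) gi gj p 1 = (\<lambda>a. p * gj a - p' * gi a)"
    using assms by (simp add: numeral_eq_Suc)
  have l1: "lam n bi (Gs (lam n bi) gi gj p 1) = p * p' - p' * A"
    unfolding G1 using assms by (simp add: lam_lin)
  have G2: "Gs (lam n bi) gi gj p 2 = (\<lambda>a. (p + A) * (p * gj a - p' * gi a) - (p * p' - p' * A) * gi a)"
    using assms l1 G1 by (simp add: numeral_eq_Suc)
  show ?thesis
  proof (cases "p = 0")
    case True
    show ?thesis
    proof (cases "p' = 0")
      case True
      then show ?thesis using \<open>p = 0\<close> assms(5) G1 by simp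
    next
      case False
      then have "m = 2" using \<open>p = 0\<close> assms(5) by simp
      then show ?thesis using G2 \<open>p = 0\<close> by (simp add: algebra_simps)
    qed
  next
    case False
    then have pA: "p = - A" using assms(1) by simp
    show ?thesis
    proof (cases "p' = 0")
      case True
      then have "m = 2" using \<open>p \<noteq> 0\<close> assms(5) by simp
      then show ?thesis using G2 pA True by (simp add: algebra_simps)
    next
      case False
      then have "m = 3" using \<open>p \<noteq> 0\<close> assms(5) by simp
      have G2': "Gs (lam n bi) gi gj p 2 = (\<lambda>a. (2 * A * p') * gi a)"
        using G2 pA by (auto simp: algebra_simps)
      have l2: "lam n bi (Gs (lam n bi) gi gj p 2) = 2 * A * p' * A"
        unfolding G2' using assms lam_lin[of n bi "2 * A * p'" gi 0 gi] by simp
      have "Gs (lam n bi) gi gj p 3 = (\<lambda>a. (p + 2 * A) * (2 * A * p' * gi a) - (2 * A * p' * A) * gi a)"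
        using G2' l2 assms(2) by (simp add: numeral_eq_Suc eval_nat_numeral)
      then show ?thesis using \<open>m = 3\<close> pA by (simp add: algebra_simps)
    qed
  qed
qed


locale setting =
  fixes emb :: "complex \<Rightarrow> 'a::comm_ring_1" and n :: nat and D :: "nat \<Rightarrow> 'a \<Rightarrow> 'a"
  assumes alg: "cplx_alg emb" and der: "\<forall>a<n. is_der emb (D a)"
    and comm: "\<forall>a<n. \<forall>b<n. lb (D a) (D b) = (\<lambda>_. 0)"
begin

abbreviation F where "F \<equiv> Fmap emb n D"

lemma emb1: "emb 1 = 1" and emb_add: "emb (x + y) = emb x + emb y" and emb_mult: "emb (x * y) = emb x * emb y"
  using alg unfolding cplx_alg_def by auto

lemma emb0: "emb 0 = 0"
  using emb_add[of 0 0] by simp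

lemma emb_neg: "emb (- x) = - emb x"
  using minus_unique[of "emb x" "emb (-x)"] emb_add[of x "-x"] emb0 by simp

lemma emb_diff: "emb (x - y) = emb x - emb y"
  using emb_add[of x "-y"] emb_neg by simp

lemma D_add: "a < n \<Longrightarrow> D a (x + y) = D a x + D a y"
  and D_mult: "a < n \<Longrightarrow> D a (x * y) = x * D a y + y * D a x"
  and D_emb: "a < n \<Longrightarrow> D a (emb z * x) = emb z * D a x"
  using der unfolding is_der_def by auto

lemma D_zero: "a < n \<Longrightarrow> D a 0 = 0"
  using D_add[of a 0 0] by simp

lemma D_sum: "a < n \<Longrightarrow> D a (sum f S) = (\<Sum>b\<in>S. D a (f b))"
  by (induct S rule: infinite_finite_induct) (auto simp: D_zero D_add)

lemma D_comm: "a < n \<Longrightarrow> b < n \<Longrightarrow> D a (D b x) = D b (D a x)"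
  using comm fun_cong[of "lb (D a) (D b)" "\<lambda>_. 0" x] unfolding lb_def by auto

lemma F_add: "F c (x + y) = F c x + F c y"
  by (simp add: Fmap_def D_add sum.distrib distrib_left)

lemma F_mult: "F c (x * y) = x * F c y + y * F c x"
  by (simp add: Fmap_def D_mult sum.distrib distrib_left sum_distrib_left algebra_simps)

lemma F_one: "F c 1 = 0"
proof -
  have "F c (1 * 1) = F c 1 + F c 1" using F_mult[of c 1 1] by simp
  then show ?thesis by simp
qed

lemma F_zero: "F (\<lambda>_. 0) x = 0"
  by (simp add: Fmap_def emb0)

lemma F_lin: "F (\<lambda>a. \<mu> * d a - \<nu> * c a) x = emb \<mu> * F d x - emb \<nu> * F c x"
  by (simp add: Fmap_def emb_diff emb_mult sum_subtractf sum_distrib_left algebra_simps)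

lemma F_comm: "F c (F d x) = F d (F c x)"
proof -
  have "F c (F d x) = (\<Sum>a<n. \<Sum>b<n. emb (c a) * emb (d b) * D a (D b x))"
    unfolding Fmap_def by (rule sum.cong) (auto simp: D_sum D_emb sum_distrib_left mult.assoc)
  also have "\<dots> = (\<Sum>b<n. \<Sum>a<n. emb (c a) * emb (d b) * D a (D b x))"
    by (rule sum.swap)
  also have "\<dots> = (\<Sum>b<n. \<Sum>a<n. emb (d b) * emb (c a) * D b (D a x))"
    by (intro sum.cong refl) (auto simp: D_comm mult.commute)
  also have "\<dots> = F d (F c x)"
    unfolding Fmap_def by (rule sum.cong) (auto simp: D_sum D_emb sum_distrib_left mult.assoc)
  finally show ?thesis .
qed

lemma F_ind: assumes "i < n" shows "F (\<lambda>a. if a = i then 1 else 0) x = D i x"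
proof -
  have "\<And>a. emb (if a = i then 1 else 0) * D a x = (if a = i then D a x else 0)"
    by (simp add: emb0 emb1)
  then show ?thesis using \<open>i < n\<close> by (simp add: Fmap_def)
qed

lemma bracket:
  assumes "F c w = emb \<mu> * w" "F d u = emb \<nu> * u"
  shows "lb (mulD u (F c)) (mulD w (F d)) = mulD (u * w) (F (\<lambda>a. \<mu> * d a - \<nu> * c a))"
proof
  fix x
  have "lb (mulD u (F c)) (mulD w (F d)) x = u * (w * F c (F d x) + F d x * F c w) - w * (u * F d (F c x) + F c x * F d u)"
    by (simp add: lb_def mulD_def F_mult)
  also have "\<dots> = u * w * (emb \<mu> * F d x - emb \<nu> * F c x)"
    using assms F_comm[of c d x] by (simp add: algebra_simps)
  finally show "lb (mulD u (F c)) (mulD w (F d)) x = mulD (u * w) (F (\<lambda>a. \<mu> * d a - \<nu> * c a)) x"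
    by (simp add: mulD_def F_lin)
qed

lemma eig_inv:
  assumes "v * w = 1" "F c v = emb \<mu> * v"
  shows "F c w = emb (- \<mu>) * w"
proof -
  have "0 = v * F c w + w * F c v" using F_mult[of c v w] F_one assms(1) by simp
  then have "0 = w * (v * F c w + w * F c v)" by simp
  also have "\<dots> = (v * w) * F c w + emb \<mu> * w * (v * w)" using assms(2) by (simp add: algebra_simps)
  also have "\<dots> = F c w + emb \<mu> * w" using assms(1) by simp
  finally have "F c w = - (emb \<mu> * w)" by (metis add_eq_0_iff2)
  then show ?thesis by (simp add: emb_neg)
qed

lemma eig_mult:
  assumes "F c x = emb \<mu> * x" "F c y = emb \<nu> * y"
  shows "F c (x * y) = emb (\<mu> + \<nu>) * (x * y)"
  using assms by (simp add: F_mult emb_add algebra_simps)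

lemma eig_pow:
  assumes "F c x = emb \<mu> * x"
  shows "F c (x ^ m) = emb (of_nat m * \<mu>) * x ^ m"
proof (induct m)
  case 0 then show ?case by (simp add: F_one emb0)
next
  case (Suc m)
  then show ?case using eig_mult[OF assms Suc] by (simp add: algebra_simps)
qed

lemma serre_iter:
  assumes "\<forall>c. F c ui = emb (lam n bi c) * ui" "\<forall>c. F c uj = emb (lam n bj c) * uj"
  shows "(lb (mulD ui (F gi)) ^^ m) (mulD uj (F gj)) =
         mulD (ui ^ m * uj) (F (Gs (lam n bi) gi gj (lam n bj gi) m))"
proof (induct m)
  case 0 then show ?case by simp
next
  case (Suc m)
  have e1: "F gi (ui ^ m * uj) = emb (lam n bj gi + of_nat m * lam n bi gi) * (ui ^ m * uj)"
    using eig_mult[OF eig_pow[of gi ui "lam n bi gi" m]] assms by (simp add: algebra_simps)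
  have e2: "F (Gs (lam n bi) gi gj (lam n bj gi) m) ui = emb (lam n bi (Gs (lam n bi) gi gj (lam n bj gi) m)) * ui"
    using assms by simp
  show ?case using Suc bracket[OF e1 e2] by (simp add: mult.assoc)
qed

lemma mulD_zero: "mulD u (F (\<lambda>_. 0)) = (\<lambda>_. 0)"
  by (simp add: mulD_def F_zero)

end


lemma pair_arith:
  fixes ai bi aj bj p q p' q' Nij :: complex
  assumes "ai * bi = -1" "aj * bj = -1"
    "- p * bj - q * p = 0" "- p * q - q * ai = 0"
    "- p' * bi - q' * p' = 0" "- p' * q' - q' * aj = 0"
    "Nij = - ai * q' - bi * p"
  shows "p \<noteq> 0 \<longrightarrow> p = - ai" "q' \<noteq> 0 \<longrightarrow> q' = - bi" "(q' = 0) = (p' = 0)" "(q = 0) = (p = 0)"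
    "Nij = - (if p = 0 then 0 else 1) - (if p' = 0 then 0 else 1)"
proof -
  have ai: "ai \<noteq> 0" and bi: "bi \<noteq> 0" and aj: "aj \<noteq> 0" and bj: "bj \<noteq> 0"
    using assms(1,2) by auto
  have A: "p \<noteq> 0 \<longrightarrow> q = - bj \<and> p = - ai"
  proof
    assume "p \<noteq> 0"
    have "p * (bj + q) = - (- p * bj - q * p)" by (simp add: algebra_simps)
    then have "p * (bj + q) = 0" by (simp only: assms(3) minus_zero)
    then have "q = - bj" using \<open>p \<noteq> 0\<close> by (simp add: add_eq_0_iff)
    moreover have "q * (p + ai) = - (- p * q - q * ai)" by (simp add: algebra_simps)
    then have "q * (p + ai) = 0" by (simp only: assms(4) minus_zero)
    moreover have "q \<noteq> 0" using \<open>q = - bj\<close> bj by simp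
    ultimately have "p + ai = 0" by simp
    then show "q = - bj \<and> p = - ai" using \<open>q = - bj\<close> by (simp add: add_eq_0_iff2)
  qed
  have B: "p = 0 \<longrightarrow> q = 0" using assms(4) ai by auto
  have A': "p' \<noteq> 0 \<longrightarrow> q' = - bi \<and> p' = - aj"
  proof
    assume "p' \<noteq> 0"
    have "p' * (bi + q') = - (- p' * bi - q' * p')" by (simp add: algebra_simps)
    then have "p' * (bi + q') = 0" by (simp only: assms(5) minus_zero)
    then have "q' = - bi" using \<open>p' \<noteq> 0\<close> by (simp add: add_eq_0_iff)
    moreover have "q' * (p' + aj) = - (- p' * q' - q' * aj)" by (simp add: algebra_simps)
    then have "q' * (p' + aj) = 0" by (simp only: assms(6) minus_zero)
    moreover have "q' \<noteq> 0" using \<open>q' = - bi\<close> bi by simp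
    ultimately have "p' + aj = 0" by simp
    then show "q' = - bi \<and> p' = - aj" using \<open>q' = - bi\<close> by (simp add: add_eq_0_iff2)
  qed
  have B': "p' = 0 \<longrightarrow> q' = 0" using assms(6) aj by auto
  show "p \<noteq> 0 \<longrightarrow> p = - ai" using A by blast
  show "q' \<noteq> 0 \<longrightarrow> q' = - bi" using A' B' by blast
  show "(q' = 0) = (p' = 0)" using A' B' bi by auto
  show "(q = 0) = (p = 0)" using A B bj by auto
  show "Nij = - (if p = 0 then 0 else 1) - (if p' = 0 then 0 else 1)"
  proof -
    have e1: "- ai * q' = - (if p' = 0 then 0 else 1)"
      using A' B' assms(1) by (cases "p' = 0") (auto simp: mult.commute)
    have e2: "- bi * p = - (if p = 0 then 0 else 1)"
      using A B assms(1) by (cases "p = 0") (auto simp: mult.commute)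
    show ?thesis unfolding assms(7) using e1 e2 by simp
  qed
qed


theorem corollary3p13:
  fixes r s :: nat and N :: "nat \<Rightarrow> nat \<Rightarrow> int"
    and alpha :: "nat \<Rightarrow> nat \<Rightarrow> complex"
    and emb :: "complex \<Rightarrow> 'a::comm_ring_1"
    and D :: "nat \<Rightarrow> 'a \<Rightarrow> 'a" and v :: "nat \<Rightarrow> 'a"
  assumes "gen_cartan r N"
    and "s = corank r N"
    and "lin_indep_fam alpha {..<r} (r + s)"
    and "\<forall>i<r. \<forall>j<r. alpha j i = of_int (N i j)"
    and "cplx_alg emb"
    and "\<forall>a<r+s. is_der emb (D a)"
    and "\<forall>a<r+s. \<forall>b<r+s. lb (D a) (D b) = (\<lambda>_. 0)"
    and "\<forall>i<r. \<exists>w. v i * w = 1"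
    and "\<forall>i<r. \<forall>c. Fmap emb (r+s) D c (v i) = emb (\<Sum>a<r+s. c a * alpha i a) * v i"
  shows "problem1 emb r s N D alpha v \<longleftrightarrow> problem2 emb r s D alpha v"
proof
  assume "problem1 emb r s N D alpha v"
  then show "problem2 emb r s D alpha v"
    unfolding problem1_def problem2_def by blast
next
  assume "problem2 emb r s D alpha v"
  then obtain dp dm where Im: "\<forall>i<r. dp i \<in> ImF emb (r+s) D \<and> dm i \<in> ImF emb (r+s) D"
    and R: "rels_abc emb r s D alpha v dp dm"
    unfolding problem2_def by blast
  interpret S: setting emb "r+s" D using assms(5,6,7) by unfold_locales
  have "rels_de r N v dp dm"
  proof (cases "(1::'a) = 0")
    case True
    have z: "x = 0" for x :: 'a
    proof -
      have "x = x * 1" by simp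
      then show "x = 0" by (simp only: True mult_zero_right)
    qed
    have zf: "\<And>f::'a \<Rightarrow> 'a. f = (\<lambda>_. 0)" using z by blast
    show ?thesis unfolding rels_de_def Let_def using zf by blast
  next
    case False
    have "\<forall>i. \<exists>c. i < r \<longrightarrow> dp i = S.F c" using Im unfolding ImF_def by blast
    from choice[OF this] obtain h where h: "\<forall>i<r. dp i = S.F (h i)" by blast
    have "\<forall>i. \<exists>c. i < r \<longrightarrow> dm i = S.F c" using Im unfolding ImF_def by blast
    from choice[OF this] obtain k where k: "\<forall>i<r. dm i = S.F (k i)" by blast
    have "\<forall>i. \<exists>c. i < r \<longrightarrow> v i * c = 1" using assms(8) by blast
    from choice[OF this] obtain w where w: "\<forall>i<r. v i * w i = 1" by blast
    have rinv: "rinv (v i) = w i" if "i < r" for i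
      unfolding rinv_def
    proof (rule the_equality)
      show "v i * w i = 1" using w that by blast
      fix y assume "v i * y = 1"
      moreover have "w i * (v i * y) = (v i * w i) * y" by (simp add: algebra_simps)
      ultimately show "y = w i" using w that by simp
    qed
    define ev where "ev l c = lam (r+s) (alpha l) c" for l c
    have eig: "S.F c (v l) = emb (ev l c) * v l" if "l < r" for l c
      using assms(9) that unfolding ev_def lam_def by blast
    have eigw: "S.F c (w l) = emb (lam (r+s) (\<lambda>a. - alpha l a) c) * w l" if "l < r" for l c
      using S.eig_inv[OF w[rule_format, OF that] eig[OF that]] by (simp add: lam_neg ev_def)
    have emb_inj: "x = y" if "emb x = emb y" for x y
    proof (rule ccontr)
      assume "x \<noteq> y"
      have "emb 1 = emb ((x - y) * inverse (x - y))" using \<open>x \<noteq> y\<close> by simp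
      also have "\<dots> = 0" using that by (simp add: S.emb_mult S.emb_diff)
      finally show False using False S.emb1 by simp
    qed
    have cancel: "x = y" if "l < r" "emb x * v l = emb y * v l" for l x y
    proof -
      have "emb x * v l * w l = emb y * v l * w l" using that(2) by simp
      then have "emb x * (v l * w l) = emb y * (v l * w l)" by (simp only: mult.assoc)
      then show ?thesis using w that(1) emb_inj by simp
    qed
    have br: "lb (mulD (v i) (S.F (h i))) (mulD (w j) (S.F (k j))) =
      mulD (v i * w j) (S.F (\<lambda>a. (- ev j (h i)) * k j a - ev i (k j) * h i a))" if "i < r" "j < r" for i j
      using S.bracket[OF eigw[OF that(2)] eig[OF that(1)]] by (simp add: lam_neg ev_def)
    have evlin: "ev l (\<lambda>a. x * c a - y * d a) = x * ev l c - y * ev l d" for l x y c d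
      unfolding ev_def by (rule lam_lin)
    from R have RB1: "\<forall>i<r. lb (mulD (v i) (dp i)) (mulD (rinv (v i)) (dm i)) = D i"
      and RB2: "\<forall>i<r. \<forall>j<r. i \<noteq> j \<longrightarrow> lb (mulD (v i) (dp i)) (mulD (rinv (v j)) (dm j)) = (\<lambda>_. 0)"
      unfolding rels_abc_def Let_def by auto
    have E1: "- ev i (h i) * ev j (k i) - ev i (k i) * ev j (h i) = of_int (N i j)" if "i < r" "j < r" for i j
    proof -
      define c where "c = (\<lambda>a. (- ev i (h i)) * k i a - ev i (k i) * h i a)"
      have "mulD (v i * w i) (S.F c) = D i"
        using RB1 br[OF that(1) that(1)] h k rinv that(1) unfolding c_def by auto
      then have "S.F c = D i" using w that(1) by (simp add: mulD_def)
      then have "S.F c (v j) = D i (v j)" by simp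
      also have "\<dots> = S.F (\<lambda>a. if a = i then 1 else 0) (v j)" using S.F_ind[of i] that(1) by simp
      also have "\<dots> = emb (ev j (\<lambda>a. if a = i then 1 else 0)) * v j" by (rule eig[OF that(2)])
      also have "ev j (\<lambda>a. if a = i then 1 else 0) = alpha j i"
      proof -
        have "\<And>a. (if a = i then 1 else 0) * alpha j a = (if a = i then alpha j a else 0)" by simp
        then show ?thesis using that(1) unfolding ev_def lam_def by simp
      qed
      finally have "emb (ev j c) * v j = emb (alpha j i) * v j" using eig[OF that(2)] by simp
      then have "ev j c = alpha j i" using cancel that(2) by blast
      then show ?thesis using assms(4) that evlin[of j "- ev i (h i)" "k i" "ev i (k i)" "h i"] unfolding c_def by simp
    qed
    have E2: "- ev j (h i) * ev l (k j) - ev i (k j) * ev l (h i) = 0"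
      if "i < r" "j < r" "i \<noteq> j" "l < r" for i j l
    proof -
      define c where "c = (\<lambda>a. (- ev j (h i)) * k j a - ev i (k j) * h i a)"
      have "mulD (v i * w j) (S.F c) = (\<lambda>_. 0)"
        using RB2 br[OF that(1) that(2)] h k rinv that unfolding c_def by auto
      then have "v i * w j * S.F c x = 0" for x unfolding mulD_def by meson
      moreover have "(v i * w i) * (v j * w j) * S.F c x = (w i * v j) * (v i * w j * S.F c x)" for x
        by (simp add: algebra_simps)
      ultimately have "(v i * w i) * (v j * w j) * S.F c x = 0" for x
        by simp
      then have "S.F c (v l) = 0" using w that by simp
      then have "emb (ev l c) * v l = emb 0 * v l" using eig[OF that(4)] S.emb0 by simp
      then have "ev l c = 0" using cancel that(4) by blast
      then show ?thesis using evlin[of l "- ev j (h i)" "k j" "ev i (k j)" "h i"] unfolding c_def by simp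
    qed
    have ab: "ev i (h i) * ev i (k i) = -1" if "i < r" for i
    proof -
      have "N i i = 2" using assms(1) that unfolding gen_cartan_def by blast
      then have "- ev i (h i) * ev i (k i) - ev i (k i) * ev i (h i) = 2" using E1[OF that that] by simp
      then have "- (2 * (ev i (h i) * ev i (k i))) = 2" by (simp add: algebra_simps)
      then have e: "2 * (ev i (h i) * ev i (k i)) = - 2" by (metis minus_minus)
      have "ev i (h i) * ev i (k i) = (2 * (ev i (h i) * ev i (k i))) / 2" by simp
      also have "\<dots> = -1" unfolding e by simp
      finally show ?thesis .
    qed
    have lamev: "lam (r+s) (alpha l) c = ev l c" for l c unfolding ev_def by simp
    have lamevn: "lam (r+s) (\<lambda>a. - alpha l a) c = - ev l c" for l c unfolding ev_def by (simp add: lam_neg)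
    show ?thesis unfolding rels_de_def Let_def
    proof (intro conjI allI impI)
      fix i j assume ij: "i < r" "j < r" "i \<noteq> j"
      note P = pair_arith[OF ab[OF ij(1)] ab[OF ij(2)] E2[OF ij(1,2,3) ij(2)] E2[OF ij(1,2,3) ij(1)]
          E2[OF ij(2,1) ij(3)[symmetric] ij(1)] E2[OF ij(2,1) ij(3)[symmetric] ij(2)] E1[OF ij(1,2), symmetric]]
      have Nint: "N i j = - (if ev j (h i) = 0 then 0 else 1) - (if ev i (h j) = 0 then 0 else 1)"
      proof -
        have o1: "(of_int (N i j)::complex) = -1 \<Longrightarrow> N i j = -1" by (metis of_int_eq_iff of_int_minus of_int_1)
        have o2: "(of_int (N i j)::complex) = -2 \<Longrightarrow> N i j = -2" by (metis of_int_eq_iff of_int_minus of_int_numeral)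
        show ?thesis using P(5) o1 o2 by (cases "ev j (h i) = 0"; cases "ev i (h j) = 0") simp_all
      qed
      have m: "nat (1 - N i j) = 1 + (if ev j (h i) = 0 then 0 else 1) + (if ev i (h j) = 0 then 0 else 1)"
        unfolding Nint by simp
      show "(lb (mulD (v i) (dp i)) ^^ nat (1 - N i j)) (mulD (v j) (dp j)) = (\<lambda>_. 0)"
      proof -
        have "(lb (mulD (v i) (dp i)) ^^ nat (1 - N i j)) (mulD (v j) (dp j)) =
          mulD (v i ^ nat (1 - N i j) * v j) (S.F (Gs (lam (r+s) (alpha i)) (h i) (h j) (lam (r+s) (alpha j) (h i)) (nat (1 - N i j))))"
          using S.serre_iter[where ui="v i" and bi="alpha i" and uj="v j" and bj="alpha j" and gi="h i" and m="nat (1 - N i j)" and gj="h j"]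
            h ij eig by (simp add: lamev)
        also have "Gs (lam (r+s) (alpha i)) (h i) (h j) (lam (r+s) (alpha j) (h i)) (nat (1 - N i j)) = (\<lambda>_. 0)"
          by (rule vanish[where bj = "alpha j" and A = "ev i (h i)" and p' = "ev i (h j)"]) (use P(1) m in \<open>simp_all add: lamev\<close>)
        finally show ?thesis by (simp add: S.mulD_zero)
      qed
      show "(lb (mulD (rinv (v i)) (dm i)) ^^ nat (1 - N i j)) (mulD (rinv (v j)) (dm j)) = (\<lambda>_. 0)"
      proof -
        have "(lb (mulD (rinv (v i)) (dm i)) ^^ nat (1 - N i j)) (mulD (rinv (v j)) (dm j)) =
          mulD (w i ^ nat (1 - N i j) * w j) (S.F (Gs (lam (r+s) (\<lambda>a. - alpha i a)) (k i) (k j) (lam (r+s) (\<lambda>a. - alpha j a) (k i)) (nat (1 - N i j))))"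
          using S.serre_iter[where ui="w i" and bi="\<lambda>a. - alpha i a" and uj="w j" and bj="\<lambda>a. - alpha j a" and gi="k i" and m="nat (1 - N i j)" and gj="k j"]
            k ij eigw rinv by simp
        also have "Gs (lam (r+s) (\<lambda>a. - alpha i a)) (k i) (k j) (lam (r+s) (\<lambda>a. - alpha j a) (k i)) (nat (1 - N i j)) = (\<lambda>_. 0)"
          by (rule vanish[where bj = "\<lambda>a. - alpha j a" and A = "- ev i (k i)" and p' = "- ev i (k j)"]) (use P(2,3,4) m in \<open>simp_all add: lamevn\<close>)
        finally show ?thesis by (simp add: S.mulD_zero)
      qed
    qed
  qed
  then show "problem1 emb r s N D alpha v"
    unfolding problem1_def using Im R by blast
qed

end
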